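(* For any $u,\alpha\in\mathbb C$ with $\mathrm{Re}(u+\alpha)>0$ and any $\kappa_1,\kappa_2\in\mathbb R$, $$\int_{\mathbb R^2}e^{-\alpha(\kappa_1+\kappa_2-\lambda_1-\lambda_2)-u(\lambda_1-\lambda_2)-e^{-(\kappa_1-\lambda_1)}-e^{-(\lambda_1-\kappa_2)}-e^{-(\kappa_2-\lambda_2)}}\,d\lambda_1d\lambda_2=\int_{\mathbb R^2}e^{-\alpha(\pi_1+\pi_2-\kappa_1-\kappa_2)-u(\pi_1-\pi_2)-e^{-(\pi_1-\kappa_1)}-e^{-(\kappa_1-\pi_2)}-e^{-(\pi_2-\kappa_2)}}\,d\pi_1d\pi_2,$$ and both integrals are finite (absolutely convergent). *)

theory Defs
  imports "HOL-Analysis.Analysis"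
begin

end

theory Submission
  imports Defs
begin

lemma E1:
  fixes a t :: real assumes a: "a > 0"
  shows "integrable lborel (\<lambda>x::real. indicator {t..} x * exp(-a*x))"
proof -
  have "(\<lambda>x. exp(-a*x)) absolutely_integrable_on {t..}"
    by (rule nonnegative_absolutely_integrable_1[OF integrable_on_exp_minus_to_infinity[OF a]]) auto
  then have "integrable lebesgue (\<lambda>x::real. indicator {t..} x *\<^sub>R exp(-a*x))"
    unfolding absolutely_integrable_on_def set_integrable_def .
  then have "integrable lebesgue (\<lambda>x::real. indicator {t..} x * exp(-a*x))" by simp
  then show ?thesis
    by (subst (asm) integrable_completion) auto
qed

lemma E2:
  fixes a t :: real assumes a: "a > 0"
  shows "integrable lborel (\<lambda>x::real. indicator {..t} x * exp(a*x))"
proof -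
  have "integrable lborel (\<lambda>x::real. (\<lambda>x. indicator {-t..} x * exp(-a*x)) (0 + (-1) * x))"
    by (rule lborel_integrable_real_affine[OF E1[OF a]]) simp
  then show ?thesis by (simp add: indicator_def)
qed

lemma exp_tangent:
  fixes m y :: real assumes "m > 0"
  shows "m * (1 + y - ln m) \<le> exp y"
proof -
  have "1 + (y - ln m) \<le> exp (y - ln m)" by (rule exp_ge_add_one_self)
  then have "m * (1 + (y - ln m)) \<le> m * exp (y - ln m)" using assms by simp
  also have "\<dots> = exp y" using assms by (simp add: exp_diff)
  finally show ?thesis by (simp add: algebra_simps)
qed

lemma A:
  fixes c k :: real assumes c: "c > 0"
  shows "integrable lborel (\<lambda>y::real. exp(c*y - exp(y - k)))"
proof -
  define m where "m = c + 1"
  have m: "m > 0" using c by (simp add: m_def)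
  define K where "K = exp (m * (k + ln m - 1))"
  have D: "integrable lborel (\<lambda>y::real. indicator {..k} y * exp(c*y) + K * (indicator {k..} y * exp(-1*y)))"
    using E1[of 1 k] E2[OF c, of k] by simp
  show ?thesis
  proof (rule Bochner_Integration.integrable_bound[OF D])
    show "(\<lambda>y::real. exp(c*y - exp(y - k))) \<in> borel_measurable lborel" by measurable
    show "AE y in lborel. norm (exp(c*y - exp(y - k))) \<le> norm (indicator {..k} y * exp(c*y) + K * (indicator {k..} y * exp(-1*y)))"
    proof (rule AE_I2)
      fix y :: real
      have b1: "exp(c*y - exp(y - k)) \<le> exp (c*y)" by simp
      have "m * (1 + (y-k) - ln m) \<le> exp (y - k)" by (rule exp_tangent[OF m])
      then have "c*y - exp(y - k) \<le> m * (k + ln m - 1) + (-1*y)"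
        by (simp add: m_def algebra_simps)
      then have b2: "exp(c*y - exp(y - k)) \<le> K * exp(-1*y)"
        unfolding K_def by (simp add: exp_add[symmetric])
      have "0 \<le> K * exp(-1*y)" by (simp add: K_def)
      moreover have "0 \<le> exp(c*y)" by simp
      ultimately show "norm (exp(c*y - exp(y - k))) \<le> norm (indicator {..k} y * exp(c*y) + K * (indicator {k..} y * exp(-1*y)))"
        using b1 b2 by (auto simp: indicator_def intro!: add_increasing)
    qed
  qed
qed

lemma A_ref:
  fixes c b :: real assumes c: "c > 0"
  shows "integrable lborel (\<lambda>x::real. exp(-c*x - exp(b - x)))"
proof -
  have "integrable lborel (\<lambda>x::real. (\<lambda>y. exp(c*y - exp(y - (-b)))) (0 + (-1) * x))"
    by (rule lborel_integrable_real_affine[OF A[OF c]]) simp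
  then show ?thesis by simp
qed

lemma B:
  fixes d a b :: real
  shows "integrable lborel (\<lambda>x::real. exp(d*x - exp(x - a) - exp(b - x)))"
proof (cases "d > -1")
  case True
  then have "d + 1 > 0" by simp
  from integrable_mult_right[OF A[OF this, of a], of "exp(-1-b)"]
  have D: "integrable lborel (\<lambda>x::real. exp(-1-b) * exp((d+1)*x - exp(x - a)))" .
  show ?thesis
  proof (rule Bochner_Integration.integrable_bound[OF D])
    show "(\<lambda>x::real. exp(d*x - exp(x - a) - exp(b - x))) \<in> borel_measurable lborel" by measurable
    show "AE x in lborel. norm (exp(d*x - exp(x - a) - exp(b - x))) \<le> norm (exp(-1-b) * exp((d+1)*x - exp(x - a)))"
    proof (rule AE_I2)
      fix x :: real
      have "1 + (b - x) \<le> exp (b - x)" by (rule exp_ge_add_one_self)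
      then have "d*x - exp(x - a) - exp(b - x) \<le> (-1-b) + ((d+1)*x - exp(x - a))"
        by (simp add: algebra_simps)
      then show "norm (exp(d*x - exp(x - a) - exp(b - x))) \<le> norm (exp(-1-b) * exp((d+1)*x - exp(x - a)))"
        by (simp add: exp_add[symmetric])
    qed
  qed
next
  case False
  then have "1 - d > 0" by simp
  from integrable_mult_right[OF A_ref[OF this, of b], of "exp(a - 1)"]
  have D: "integrable lborel (\<lambda>x::real. exp(a - 1) * exp(-(1-d)*x - exp(b - x)))" .
  show ?thesis
  proof (rule Bochner_Integration.integrable_bound[OF D])
    show "(\<lambda>x::real. exp(d*x - exp(x - a) - exp(b - x))) \<in> borel_measurable lborel" by measurable
    show "AE x in lborel. norm (exp(d*x - exp(x - a) - exp(b - x))) \<le> norm (exp(a - 1) * exp(-(1-d)*x - exp(b - x)))"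
    proof (rule AE_I2)
      fix x :: real
      have "1 + (x - a) \<le> exp (x - a)" by (rule exp_ge_add_one_self)
      then have "d*x - exp(x - a) - exp(b - x) \<le> (a - 1) + (-(1-d)*x - exp(b - x))"
        by (simp add: algebra_simps)
      then show "norm (exp(d*x - exp(x - a) - exp(b - x))) \<le> norm (exp(a - 1) * exp(-(1-d)*x - exp(b - x)))"
        by (simp add: exp_add[symmetric])
    qed
  qed
qed

lemma P:
  fixes f g :: "real \<Rightarrow> complex"
  assumes f: "integrable lborel f" and g: "integrable lborel g"
  shows "integrable lborel (\<lambda>(x::real, y::real). f x * g y)"
    and "integral\<^sup>L lborel (\<lambda>(x::real, y::real). f x * g y) = integral\<^sup>L lborel f * integral\<^sup>L lborel g"
proof -

  have fm[measurable]: "f \<in> borel_measurable lborel" using f by (rule borel_measurable_integrable)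
  have gm[measurable]: "g \<in> borel_measurable lborel" using g by (rule borel_measurable_integrable)
  have I: "integrable (lborel \<Otimes>\<^sub>M lborel) (\<lambda>(x::real, y::real). f x * g y)"
  proof (rule lborel_pair.Fubini_integrable)
    show "(\<lambda>(x::real, y::real). f x * g y) \<in> borel_measurable (lborel \<Otimes>\<^sub>M lborel)" by measurable
    have "integrable lborel (\<lambda>x. norm (f x) * (\<integral>y. norm (g y) \<partial>lborel))"
      using f by (intro integrable_mult_left) (simp add: integrable_norm_iff)
    then show "integrable lborel (\<lambda>x. \<integral>y. norm (case (x, y) of (x, y) \<Rightarrow> f x * g y) \<partial>lborel)"
      by (simp add: norm_mult)
    show "AE x in lborel. integrable lborel (\<lambda>y. case (x, y) of (x, y) \<Rightarrow> f x * g y)"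
      using g by simp
  qed
  then show "integrable lborel (\<lambda>(x::real, y::real). f x * g y)" by (simp add: lborel_prod)
  have "integral\<^sup>L (lborel \<Otimes>\<^sub>M lborel) (\<lambda>(x::real, y::real). f x * g y) = (\<integral>x. (\<integral>y. f x * g y \<partial>lborel) \<partial>lborel)"
    using lborel_pair.integral_fst[of "\<lambda>x y. f x * g y"] I by simp
  also have "\<dots> = integral\<^sup>L lborel f * integral\<^sup>L lborel g" by simp
  finally show "integral\<^sup>L lborel (\<lambda>(x::real, y::real). f x * g y) = integral\<^sup>L lborel f * integral\<^sup>L lborel g"
    by (simp add: lborel_prod)
qed

lemma lborel_abs:
  fixes h :: "'a::euclidean_space \<Rightarrow> 'b::euclidean_space"
  assumes "integrable lborel h"
  shows "h absolutely_integrable_on UNIV"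
proof -
  have "integrable lebesgue h"
    using assms by (subst integrable_completion) (auto intro: borel_measurable_integrable)
  then show ?thesis unfolding absolutely_integrable_on_def set_integrable_def by simp
qed

theorem lemma3p6:
  fixes u \<alpha> :: complex and \<kappa>1 \<kappa>2 :: real
  assumes "Re (u + \<alpha>) > 0"
  defines "F \<equiv> (\<lambda>(l1::real, l2::real).
      exp (- \<alpha> * complex_of_real (\<kappa>1 + \<kappa>2 - l1 - l2) - u * complex_of_real (l1 - l2)
           - complex_of_real (exp (- (\<kappa>1 - l1)) + exp (- (l1 - \<kappa>2)) + exp (- (\<kappa>2 - l2)))))"
    and "G \<equiv> (\<lambda>(p1::real, p2::real).
      exp (- \<alpha> * complex_of_real (p1 + p2 - \<kappa>1 - \<kappa>2) - u * complex_of_real (p1 - p2)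
           - complex_of_real (exp (- (p1 - \<kappa>1)) + exp (- (\<kappa>1 - p2)) + exp (- (p2 - \<kappa>2)))))"
  shows "F absolutely_integrable_on UNIV \<and> G absolutely_integrable_on UNIV
         \<and> integral UNIV F = integral UNIV G"
proof -
  define k where "k = \<kappa>1 + \<kappa>2"
  define C where "C = exp (- \<alpha> * complex_of_real k)"
  define f1 where "f1 = (\<lambda>x::real. exp ((\<alpha> - u) * complex_of_real x - complex_of_real (exp (x - \<kappa>1) + exp (\<kappa>2 - x))))"
  define f2 where "f2 = (\<lambda>y::real. exp ((\<alpha> + u) * complex_of_real y - complex_of_real (exp (y - \<kappa>2))))"
  define g1 where "g1 = (\<lambda>x::real. f1 (k + (-1) * x))"
  define g2 where "g2 = (\<lambda>x::real. f2 (k + (-1) * x))"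
  have m1[measurable]: "f1 \<in> borel_measurable lborel" unfolding f1_def by measurable
  have m2[measurable]: "f2 \<in> borel_measurable lborel" unfolding f2_def by measurable
  have "integrable lborel (\<lambda>x. norm (f1 x))"
    using B[of "Re (\<alpha> - u)" \<kappa>1 \<kappa>2] by (simp add: f1_def diff_diff_eq)
  then have i1: "integrable lborel f1" by (simp add: integrable_norm_iff)
  have "Re (\<alpha> + u) > 0" using assms(1) by (simp add: add.commute)
  from A[OF this, of \<kappa>2]
  have "integrable lborel (\<lambda>x. norm (f2 x))" by (simp add: f2_def)
  then have i2: "integrable lborel f2" by (simp add: integrable_norm_iff)
  have j1: "integrable lborel g1" unfolding g1_def by (rule lborel_integrable_real_affine[OF i1]) simp
  have j2: "integrable lborel g2" unfolding g2_def by (rule lborel_integrable_real_affine[OF i2]) simp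
  have e1: "integral\<^sup>L lborel g1 = integral\<^sup>L lborel f1"
    using lborel_integral_real_affine[of "-1" f1 k] by (simp add: g1_def)
  have e2: "integral\<^sup>L lborel g2 = integral\<^sup>L lborel f2"
    using lborel_integral_real_affine[of "-1" f2 k] by (simp add: g2_def)
  have Feq: "F = (\<lambda>(x, y). C * (f1 x * f2 y))"
  proof (intro ext, clarify)
    fix l1 l2 :: real
    show "F (l1, l2) = C * (f1 l1 * f2 l2)"
      unfolding F_def C_def f1_def f2_def k_def
      by (simp add: exp_add[symmetric] algebra_simps)
  qed
  have Geq: "G = (\<lambda>(x, y). C * (g2 x * g1 y))"
  proof (intro ext, clarify)
    fix l1 l2 :: real
    show "G (l1, l2) = C * (g2 l1 * g1 l2)"
      unfolding G_def C_def f1_def f2_def g1_def g2_def k_def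
      by (simp add: exp_add[symmetric] algebra_simps)
  qed
  have IF: "integrable lborel F" unfolding Feq case_prod_beta
    using integrable_mult_right[OF P(1)[OF i1 i2], of C] by (simp add: case_prod_beta)
  have IG: "integrable lborel G" unfolding Geq case_prod_beta
    using integrable_mult_right[OF P(1)[OF j2 j1], of C] by (simp add: case_prod_beta)
  have vF: "integral UNIV F = C * (integral\<^sup>L lborel f1 * integral\<^sup>L lborel f2)"
    using integral_lborel[OF IF] P(2)[OF i1 i2, unfolded case_prod_beta] unfolding Feq case_prod_beta by simp
  have vG: "integral UNIV G = C * (integral\<^sup>L lborel g2 * integral\<^sup>L lborel g1)"
    using integral_lborel[OF IG] P(2)[OF j2 j1, unfolded case_prod_beta] unfolding Geq case_prod_beta by simp
  show ?thesis
    using lborel_abs[OF IF] lborel_abs[OF IG] vF vG e1 e2 by (simp add: mult.commute)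
qed

end
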